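(* There is an absolute constant $c>0$ such that for every star celebrity game $\Gamma=\langle V,(w_u)_{u\in V},\alpha,\beta\rangle$ with $\beta>1$ and $n=|V|$, $PoA(\Gamma)\le c\,n$.
   Context: A celebrity game $\Gamma=\langle V,(w_u)_{u\in V},\alpha,\beta\rangle$ consists of a set of players $V=\{1,\dots,n\}$, celebrity weights $w_u>0$, a link cost $\alpha>0$ and a critical distance $\beta$ with $1\le\beta\le n-1$. A strategy of player $u$ is a set $S_u\subseteq V\setminus\{u\}$; a strategy profile is $S=(S_1,\dots,S_n)$; its outcome graph $G[S]$ is the undirected graph on $V$ with edge set $\{\{u,v\}: u\in S_v\text{ or }v\in S_u\}$. With $d_G$ the graph distance (infinite between different connected components), the cost of player $u$ is $c_u(S)=\alpha|S_u|+\sum_{v:\,d_{G[S]}(u,v)>\beta}w_v$ and the social cost is $C(S)=\sum_{u\in V}c_u(S)$. $S$ is a Nash equilibrium (NE) if no player can strictly decrease its cost by changing only its own strategy. $\mathrm{opt}(\Gamma)=\min_S C(S)$ and $PoA(\Gamma)=\max_{S\text{ NE}}C(S)/\mathrm{opt}(\Gamma)$. $\Gamma$ is a star celebrity game if $G[S]$ is connected for some NE $S$. *)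

theory Defs
  imports Main "HOL-Library.Extended_Nat"
begin

definition players :: "nat \<Rightarrow> nat set" where
  "players n = {1..n}"

definition profiles :: "nat \<Rightarrow> (nat \<Rightarrow> nat set) set" where
  "profiles n = {S. \<forall>u. S u \<subseteq> (if u \<in> players n then players n - {u} else {})}"

definition edge :: "(nat \<Rightarrow> nat set) \<Rightarrow> nat \<Rightarrow> nat \<Rightarrow> bool" where
  "edge S u v \<longleftrightarrow> u \<in> S v \<or> v \<in> S u"

definition walk :: "(nat \<Rightarrow> nat set) \<Rightarrow> nat \<Rightarrow> nat \<Rightarrow> nat \<Rightarrow> bool" where
  "walk S u v k \<longleftrightarrow> (\<exists>p :: nat list. length p = Suc k \<and> p ! 0 = u \<and> p ! k = v \<and>
      (\<forall>i<k. edge S (p ! i) (p ! Suc i)))"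

text \<open>Graph distance (infinite if no path).\<close>
definition gdist :: "(nat \<Rightarrow> nat set) \<Rightarrow> nat \<Rightarrow> nat \<Rightarrow> enat" where
  "gdist S u v = (INF k \<in> {k. walk S u v k}. enat k)"

definition cost :: "nat \<Rightarrow> (nat \<Rightarrow> real) \<Rightarrow> real \<Rightarrow> nat \<Rightarrow> (nat \<Rightarrow> nat set) \<Rightarrow> nat \<Rightarrow> real" where
  "cost n w \<alpha> \<beta> S u = \<alpha> * real (card (S u)) +
      (\<Sum>v \<in> {v \<in> players n. gdist S u v > enat \<beta>}. w v)"

definition social_cost :: "nat \<Rightarrow> (nat \<Rightarrow> real) \<Rightarrow> real \<Rightarrow> nat \<Rightarrow> (nat \<Rightarrow> nat set) \<Rightarrow> real" where
  "social_cost n w \<alpha> \<beta> S = (\<Sum>u \<in> players n. cost n w \<alpha> \<beta> S u)"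

definition is_NE :: "nat \<Rightarrow> (nat \<Rightarrow> real) \<Rightarrow> real \<Rightarrow> nat \<Rightarrow> (nat \<Rightarrow> nat set) \<Rightarrow> bool" where
  "is_NE n w \<alpha> \<beta> S \<longleftrightarrow> S \<in> profiles n \<and>
     (\<forall>u \<in> players n. \<forall>T. T \<subseteq> players n - {u} \<longrightarrow>
        cost n w \<alpha> \<beta> S u \<le> cost n w \<alpha> \<beta> (S(u := T)) u)"

definition opt :: "nat \<Rightarrow> (nat \<Rightarrow> real) \<Rightarrow> real \<Rightarrow> nat \<Rightarrow> real" where
  "opt n w \<alpha> \<beta> = Min (social_cost n w \<alpha> \<beta> ` profiles n)"

definition PoA :: "nat \<Rightarrow> (nat \<Rightarrow> real) \<Rightarrow> real \<Rightarrow> nat \<Rightarrow> real" where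
  "PoA n w \<alpha> \<beta> = Max ((\<lambda>S. social_cost n w \<alpha> \<beta> S / opt n w \<alpha> \<beta>) ` {S. is_NE n w \<alpha> \<beta> S})"

definition connected_outcome :: "nat \<Rightarrow> (nat \<Rightarrow> nat set) \<Rightarrow> bool" where
  "connected_outcome n S \<longleftrightarrow> (\<forall>u \<in> players n. \<forall>v \<in> players n. gdist S u v < \<infinity>)"

definition celebrity_game :: "nat \<Rightarrow> (nat \<Rightarrow> real) \<Rightarrow> real \<Rightarrow> nat \<Rightarrow> bool" where
  "celebrity_game n w \<alpha> \<beta> \<longleftrightarrow> (\<forall>u \<in> players n. w u > 0) \<and> \<alpha> > 0 \<and> 1 \<le> \<beta> \<and> \<beta> \<le> n - 1"

definition star_celebrity_game :: "nat \<Rightarrow> (nat \<Rightarrow> real) \<Rightarrow> real \<Rightarrow> nat \<Rightarrow> bool" where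
  "star_celebrity_game n w \<alpha> \<beta> \<longleftrightarrow> celebrity_game n w \<alpha> \<beta> \<and>
     (\<exists>S. is_NE n w \<alpha> \<beta> S \<and> connected_outcome n S)"

end

theory Submission
  imports Defs
begin

lemma gdist_le: "walk S u v k \<Longrightarrow> gdist S u v \<le> enat k"
  unfolding gdist_def by (rule INF_lower) simp

lemma walk_refl: "walk S u u 0"
  unfolding walk_def by (rule exI[of _ "[u]"]) simp

lemma walk_one: "v \<in> S u \<Longrightarrow> walk S u v 1"
  unfolding walk_def edge_def by (rule exI[of _ "[u,v]"]) simp

lemma gdist_inf: "(\<And>k. \<not> walk S u v k) \<Longrightarrow> gdist S u v = \<infinity>"
  unfolding gdist_def by (simp add: top_enat_def[symmetric])

lemma walk_from_iso:
  assumes "S u0 = {}" "\<forall>v. u0 \<notin> S v" "walk S u0 v k"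
  shows "v = u0"
proof -
  from assms(3) obtain p where p: "length p = Suc k" "p ! 0 = u0" "p ! k = v"
    "\<forall>i<k. edge S (p ! i) (p ! Suc i)" unfolding walk_def by blast
  show ?thesis
  proof (cases k)
    case 0 then show ?thesis using p by simp
  next
    case (Suc j)
    then have "edge S (p ! 0) (p ! 1)" using p(4) by auto
    then show ?thesis using assms(1,2) p(2) unfolding edge_def by auto
  qed
qed

lemma walk_to_iso:
  assumes "S u0 = {}" "\<forall>v. u0 \<notin> S v" "walk S x u0 k"
  shows "x = u0"
proof -
  from assms(3) obtain p where p: "length p = Suc k" "p ! 0 = x" "p ! k = u0"
    "\<forall>i<k. edge S (p ! i) (p ! Suc i)" unfolding walk_def by blast
  show ?thesis
  proof (cases k)
    case 0 then show ?thesis using p by simp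
  next
    case (Suc j)
    then have "edge S (p ! j) (p ! Suc j)" using p(4) by auto
    then show ?thesis using assms(1,2) p(3) Suc unfolding edge_def by auto
  qed
qed

lemma far_nonneg:
  fixes w :: "nat \<Rightarrow> real"
  assumes "\<forall>u \<in> players n. w u > 0"
  shows "0 \<le> (\<Sum>v \<in> {v \<in> players n. P v}. w v)"
proof (rule sum_nonneg)
  fix x assume "x \<in> {v \<in> players n. P v}"
  then show "0 \<le> w x" using assms by (auto intro: less_imp_le)
qed

lemma cost_nonneg:
  assumes "\<forall>u \<in> players n. w u > 0" "\<alpha> > 0"
  shows "0 \<le> cost n w \<alpha> \<beta> S u"
  unfolding cost_def using far_nonneg[OF assms(1)] assms(2) by simp

lemma cost_all:
  assumes "u \<in> players n" "1 \<le> \<beta>"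
  shows "cost n w \<alpha> \<beta> (S(u := players n - {u})) u = \<alpha> * real (n - 1)"
proof -
  let ?S = "S(u := players n - {u})"
  have e: "{v \<in> players n. gdist ?S u v > enat \<beta>} = {}"
  proof (safe)
    fix v assume v: "v \<in> players n" "gdist ?S u v > enat \<beta>"
    show "v \<in> {}"
    proof (cases "v = u")
      case True
      then have "gdist ?S u v \<le> enat 0" using gdist_le walk_refl by metis
      then show ?thesis using v(2) by (simp add: zero_enat_def[symmetric])
    next
      case False
      then have "v \<in> ?S u" using v by simp
      then have "gdist ?S u v \<le> enat 1" using gdist_le walk_one by metis
      then show ?thesis using v(2) assms(2)
        by (metis enat_ord_simps(1) leD order.strict_trans2 le_less_trans linorder_not_le)
    qed
  qed
  moreover have "card (players n - {u}) = n - 1" using assms(1) by (simp add: players_def)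
  ultimately show ?thesis unfolding cost_def e by simp
qed

lemma cost_empty:
  assumes "\<forall>u \<in> players n. w u > 0" 
  shows "cost n w \<alpha> \<beta> (S(u := {})) u \<le> (\<Sum>v\<in>players n. w v)"
  unfolding cost_def using assms
  by (simp, intro sum_mono2) (auto simp: players_def intro: less_imp_le)

lemma players_fin: "finite (players n)" by (simp add: players_def)
lemma card_players: "card (players n) = n" by (simp add: players_def)

lemma prof_sub: "S \<in> profiles n \<Longrightarrow> S u \<subseteq> players n"
  unfolding profiles_def by (auto split: if_splits)

lemma prof_out: "S \<in> profiles n \<Longrightarrow> u \<notin> players n \<Longrightarrow> S u = {}"
  unfolding profiles_def by (auto split: if_splits)

lemma sc_lower:
  fixes w :: "nat \<Rightarrow> real"
  assumes pos: "\<forall>u\<in>players n. w u > 0" and a: "\<alpha> > 0" and n: "n \<ge> 2" and S: "S \<in> profiles n"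
  shows "min (\<alpha> * real n / 2) (\<Sum>v\<in>players n. w v) \<le> social_cost n w \<alpha> \<beta> S"
proof (cases "\<exists>u0\<in>players n. S u0 = {} \<and> (\<forall>v. u0 \<notin> S v)")
  case True
  then obtain u0 where u0: "u0 \<in> players n" "S u0 = {}" "\<forall>v. u0 \<notin> S v" by blast
  define x where "x = (if u0 = 1 then 2 else (1::nat))"
  have x: "x \<in> players n" "x \<noteq> u0" using n unfolding x_def players_def by auto
  have far0: "players n - {u0} \<subseteq> {v \<in> players n. gdist S u0 v > enat \<beta>}"
  proof
    fix v assume v: "v \<in> players n - {u0}"
    then have "gdist S u0 v = \<infinity>" using walk_from_iso[OF u0(2,3)] by (intro gdist_inf) blast
    then show "v \<in> {v \<in> players n. gdist S u0 v > enat \<beta>}" using v by simp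
  qed
  have "gdist S x u0 = \<infinity>" using walk_to_iso[OF u0(2,3)] x(2) by (intro gdist_inf) blast
  then have farx: "u0 \<in> {v \<in> players n. gdist S x v > enat \<beta>}" using u0 by simp
  have W: "(\<Sum>v\<in>players n. w v) = w u0 + (\<Sum>v\<in>players n - {u0}. w v)"
    using u0(1) players_fin by (simp add: sum.remove)
  have "(\<Sum>v\<in>players n - {u0}. w v) \<le> (\<Sum>v\<in>{v \<in> players n. gdist S u0 v > enat \<beta>}. w v)"
    using far0 pos by (intro sum_mono2) (auto simp: players_fin intro: less_imp_le)
  also have "\<dots> \<le> cost n w \<alpha> \<beta> S u0" unfolding cost_def using a by simp
  finally have c0: "(\<Sum>v\<in>players n - {u0}. w v) \<le> cost n w \<alpha> \<beta> S u0" .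
  have "w u0 \<le> (\<Sum>v\<in>{v \<in> players n. gdist S x v > enat \<beta>}. w v)"
    using farx pos by (intro member_le_sum) (auto simp: players_fin intro: less_imp_le)
  also have "\<dots> \<le> cost n w \<alpha> \<beta> S x" unfolding cost_def using a by simp
  finally have cx: "w u0 \<le> cost n w \<alpha> \<beta> S x" .
  have "cost n w \<alpha> \<beta> S u0 + cost n w \<alpha> \<beta> S x = (\<Sum>u\<in>{u0,x}. cost n w \<alpha> \<beta> S u)"
    using x(2) by simp
  also have "\<dots> \<le> social_cost n w \<alpha> \<beta> S" unfolding social_cost_def
    using u0(1) x(1) cost_nonneg[OF pos a] by (intro sum_mono2) (auto simp: players_fin)
  finally show ?thesis using W c0 cx by linarith
next
  case False
  define A where "A = {u \<in> players n. S u \<noteq> {}}"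
  have finS: "\<And>u. finite (S u)" using prof_sub[OF S] players_fin by (meson finite_subset)
  have "card A = (\<Sum>u\<in>A. 1)" by simp
  also have "\<dots> \<le> (\<Sum>u\<in>A. card (S u))"
    by (intro sum_mono) (auto simp: A_def finS card_gt_0_iff Suc_le_eq)
  also have "\<dots> \<le> (\<Sum>u\<in>players n. card (S u))"
    by (intro sum_mono2) (auto simp: A_def players_fin)
  finally have c1: "card A \<le> (\<Sum>u\<in>players n. card (S u))" .
  have "players n - A \<subseteq> (\<Union>v\<in>players n. S v)"
  proof
    fix u assume u: "u \<in> players n - A"
    then have "S u = {}" by (auto simp: A_def)
    then obtain v where "u \<in> S v" using False u by auto
    moreover then have "v \<in> players n" using prof_out[OF S] by blast
    ultimately show "u \<in> (\<Union>v\<in>players n. S v)" by blast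
  qed
  then have "card (players n - A) \<le> card (\<Union>v\<in>players n. S v)"
    by (intro card_mono) (auto simp: players_fin finS)
  also have "\<dots> \<le> (\<Sum>u\<in>players n. card (S u))" by (rule card_UN_le) (simp add: players_fin)
  finally have c2: "card (players n - A) \<le> (\<Sum>u\<in>players n. card (S u))" .
  have "card A + card (players n - A) = n"
    using card_players[of n] players_fin[of n]
    by (metis A_def card_Diff_subset add_diff_inverse_nat card_mono le_less_trans linorder_not_le mem_Collect_eq subsetI finite_subset)
  then have nn: "real n \<le> 2 * real (\<Sum>u\<in>players n. card (S u))" using c1 c2 by linarith
  have "(\<Sum>u\<in>players n. \<alpha> * real (card (S u))) \<le> social_cost n w \<alpha> \<beta> S"
    unfolding social_cost_def cost_def using far_nonneg[OF pos] by (intro sum_mono) simp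
  moreover have "(\<Sum>u\<in>players n. \<alpha> * real (card (S u))) = \<alpha> * real (\<Sum>u\<in>players n. card (S u))"
    by (simp add: sum_distrib_left)
  moreover have "\<alpha> * real n / 2 \<le> \<alpha> * real (\<Sum>u\<in>players n. card (S u))"
    using nn a by (simp add: field_simps)
  ultimately show ?thesis by linarith
qed

lemma profiles_fin: "finite (profiles n)"
proof -
  have "profiles n \<subseteq> {f. \<forall>x. (x \<in> players n \<longrightarrow> f x \<in> Pow (players n)) \<and> (x \<notin> players n \<longrightarrow> f x = {})}"
    using prof_sub prof_out by blast
  moreover have "finite {f. \<forall>x. (x \<in> players n \<longrightarrow> f x \<in> Pow (players n)) \<and> (x \<notin> players n \<longrightarrow> f x = ({}::nat set))}"
    by (rule finite_set_of_finite_funs) (auto simp: players_fin)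
  ultimately show ?thesis by (rule finite_subset)
qed

lemma main:
  fixes w :: "nat \<Rightarrow> real"
  assumes g: "star_celebrity_game n w \<alpha> \<beta>" and b: "\<beta> > 1"
  shows "PoA n w \<alpha> \<beta> \<le> 2 * real n"
proof -
  have pos: "\<forall>u\<in>players n. w u > 0" and a: "\<alpha> > 0" and b1: "1 \<le> \<beta>" and bn: "\<beta> \<le> n - 1"
    using g unfolding star_celebrity_game_def celebrity_game_def by auto
  obtain S0 where S0: "is_NE n w \<alpha> \<beta> S0" using g unfolding star_celebrity_game_def by blast
  have n: "n \<ge> 2" using b bn by linarith
  define W where "W = (\<Sum>v\<in>players n. w v)"
  define m where "m = min (\<alpha> * real (n - 1)) W"
  have "1 \<in> players n" using n by (simp add: players_def)
  then have "W > 0" unfolding W_def using pos by (intro sum_pos) (auto simp: players_fin)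
  moreover have "\<alpha> * real (n - 1) > 0" using a n by simp
  ultimately have m0: "m > 0" unfolding m_def by (metis min_def)
  have e: "(\<lambda>_. {}) \<in> profiles n" unfolding profiles_def by simp
  have "m / 2 \<le> opt n w \<alpha> \<beta>"
    unfolding opt_def
  proof (subst Min_ge_iff)
    show "finite (social_cost n w \<alpha> \<beta> ` profiles n)" using profiles_fin by simp
    show "social_cost n w \<alpha> \<beta> ` profiles n \<noteq> {}" using e by blast
    show "\<forall>a\<in>social_cost n w \<alpha> \<beta> ` profiles n. m / 2 \<le> a"
    proof
      fix x assume "x \<in> social_cost n w \<alpha> \<beta> ` profiles n"
      then obtain S where S: "S \<in> profiles n" "x = social_cost n w \<alpha> \<beta> S" by blast
      have "min (\<alpha> * real n / 2) W \<le> x" using sc_lower[OF pos a n S(1)] S(2) W_def by simp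
      moreover have "\<alpha> * real (n - 1) \<le> \<alpha> * real n" using a by simp
      ultimately show "m / 2 \<le> x" unfolding m_def using \<open>W > 0\<close> by linarith
    qed
  qed
  then have opt0: "opt n w \<alpha> \<beta> > 0" and optb: "m / 2 \<le> opt n w \<alpha> \<beta>" using m0 by auto
  have NEfin: "finite {S. is_NE n w \<alpha> \<beta> S}"
    by (rule finite_subset[OF _ profiles_fin[of n]]) (auto simp: is_NE_def)
  show ?thesis unfolding PoA_def
  proof (subst Max_le_iff)
    show "finite ((\<lambda>S. social_cost n w \<alpha> \<beta> S / opt n w \<alpha> \<beta>) ` {S. is_NE n w \<alpha> \<beta> S})"
      using NEfin by simp
    show "(\<lambda>S. social_cost n w \<alpha> \<beta> S / opt n w \<alpha> \<beta>) ` {S. is_NE n w \<alpha> \<beta> S} \<noteq> {}"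
      using S0 by blast
    show "\<forall>a\<in>(\<lambda>S. social_cost n w \<alpha> \<beta> S / opt n w \<alpha> \<beta>) ` {S. is_NE n w \<alpha> \<beta> S}. a \<le> 2 * real n"
    proof
      fix x assume "x \<in> (\<lambda>S. social_cost n w \<alpha> \<beta> S / opt n w \<alpha> \<beta>) ` {S. is_NE n w \<alpha> \<beta> S}"
      then obtain S where S: "is_NE n w \<alpha> \<beta> S" "x = social_cost n w \<alpha> \<beta> S / opt n w \<alpha> \<beta>" by blast
      have cu: "cost n w \<alpha> \<beta> S u \<le> m" if u: "u \<in> players n" for u
      proof -
        have "cost n w \<alpha> \<beta> S u \<le> cost n w \<alpha> \<beta> (S(u := players n - {u})) u"
          using S(1) u unfolding is_NE_def by blast
        then have 1: "cost n w \<alpha> \<beta> S u \<le> \<alpha> * real (n - 1)" using cost_all[OF u b1] by simp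
        have "cost n w \<alpha> \<beta> S u \<le> cost n w \<alpha> \<beta> (S(u := {})) u"
          using S(1) u unfolding is_NE_def by blast
        then have 2: "cost n w \<alpha> \<beta> S u \<le> W" using cost_empty[OF pos, of \<alpha> \<beta> S u] W_def by simp
        show ?thesis using 1 2 unfolding m_def by simp
      qed
      have "social_cost n w \<alpha> \<beta> S \<le> real (card (players n)) * m"
        unfolding social_cost_def by (rule sum_bounded_above) (rule cu)
      then have "social_cost n w \<alpha> \<beta> S \<le> real n * m" by (simp add: card_players)
      also have "\<dots> \<le> 2 * real n * opt n w \<alpha> \<beta>"
        using optb mult_left_mono[OF optb, of "2 * real n"] by simp
      finally show "x \<le> 2 * real n" using S(2) opt0 by (simp add: pos_divide_le_eq)
    qed
  qed
qed

theorem theorem2: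
  shows "\<exists>c::real. c > 0 \<and> (\<forall>(n::nat) (w::nat \<Rightarrow> real) (\<alpha>::real) (\<beta>::nat).
           star_celebrity_game n w \<alpha> \<beta> \<and> \<beta> > 1 \<longrightarrow> PoA n w \<alpha> \<beta> \<le> c * real n)"
  using main by (intro exI[of _ 2]) auto

end
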